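(* Let $G$ be a locally compact group, $\delta>0$, and $\mu$ a continuous unitary character of $G$. Let $f:G\to\mathbb{C}$ be continuous and satisfy $$|f(xy)+\mu(y)f(xy^{-1})-2f(x)f(y)|\le\delta\quad\text{for all }x,y\in G.$$ Then either $f$ is bounded or $f(xy)+\mu(y)f(xy^{-1})=2f(x)f(y)$ for all $x,y\in G$.
   Context: A unitary character is a continuous homomorphism $\mu:G\to\{z\in\mathbb{C}:|z|=1\}$. *)

theory Defs
  imports "HOL-Analysis.Analysis" "HOL-Algebra.Group"
begin

definition locally_compact_group :: "('a, 'b) monoid_scheme \<Rightarrow> 'a topology \<Rightarrow> bool" where
  "locally_compact_group G T \<longleftrightarrow>
     group G \<and> topspace T = carrier G \<and>
     continuous_map (prod_topology T T) T (\<lambda>(x, y). x \<otimes>\<^bsub>G\<^esub> y) \<and>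
     continuous_map T T (\<lambda>x. inv\<^bsub>G\<^esub> x) \<and>
     locally_compact_space T \<and> Hausdorff_space T"

definition unitary_character :: "('a, 'b) monoid_scheme \<Rightarrow> 'a topology \<Rightarrow> ('a \<Rightarrow> complex) \<Rightarrow> bool" where
  "unitary_character G T \<mu> \<longleftrightarrow>
     continuous_map T euclidean \<mu> \<and>
     (\<forall>x\<in>carrier G. cmod (\<mu> x) = 1) \<and>
     (\<forall>x\<in>carrier G. \<forall>y\<in>carrier G. \<mu> (x \<otimes>\<^bsub>G\<^esub> y) = \<mu> x * \<mu> y)"

end

theory Submission
  imports Defs
begin

lemma tri5: "norm (- (a::complex) - b + c + d + e) \<le> norm a + norm b + norm c + norm d + norm e"
proof -
  have "norm (- a - b + c + d + e) \<le> norm (- a - b + c + d) + norm e" by (rule norm_triangle_ineq)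
  moreover have "norm (- a - b + c + d) \<le> norm (- a - b + c) + norm d" by (rule norm_triangle_ineq)
  moreover have "norm (- a - b + c) \<le> norm (- a - b) + norm c" by (rule norm_triangle_ineq)
  moreover have "norm (- a - b) \<le> norm (- a) + norm b" by (rule norm_triangle_ineq4)
  ultimately show ?thesis by simp
qed

theorem corollary5p9:
  fixes G :: "('a, 'b) monoid_scheme" and T :: "'a topology"
    and \<mu> f :: "'a \<Rightarrow> complex" and \<delta> :: real
  assumes "locally_compact_group G T"
    and "\<delta> > 0"
    and "unitary_character G T \<mu>"
    and "continuous_map T euclidean f"
    and "\<forall>x\<in>carrier G. \<forall>y\<in>carrier G.
           cmod (f (x \<otimes>\<^bsub>G\<^esub> y) + \<mu> y * f (x \<otimes>\<^bsub>G\<^esub> inv\<^bsub>G\<^esub> y) - 2 * f x * f y) \<le> \<delta>"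
  shows "(\<exists>M. \<forall>x\<in>carrier G. cmod (f x) \<le> M) \<or>
         (\<forall>x\<in>carrier G. \<forall>y\<in>carrier G.
           f (x \<otimes>\<^bsub>G\<^esub> y) + \<mu> y * f (x \<otimes>\<^bsub>G\<^esub> inv\<^bsub>G\<^esub> y) = 2 * f x * f y)"
proof -
  have grp: "group G" using assms(1) unfolding locally_compact_group_def by blast
  interpret group G by (rule grp)
  have mn: "\<And>x. x \<in> carrier G \<Longrightarrow> cmod (\<mu> x) = 1"
    and mm: "\<And>x y. x \<in> carrier G \<Longrightarrow> y \<in> carrier G \<Longrightarrow> \<mu> (x \<otimes>\<^bsub>G\<^esub> y) = \<mu> x * \<mu> y"
    using assms(3) unfolding unitary_character_def by auto
  have mu1: "\<mu> \<one>\<^bsub>G\<^esub> = 1"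
  proof -
    have "\<mu> \<one>\<^bsub>G\<^esub> = \<mu> \<one>\<^bsub>G\<^esub> * \<mu> \<one>\<^bsub>G\<^esub>" using mm[of "\<one>\<^bsub>G\<^esub>" "\<one>\<^bsub>G\<^esub>"] by simp
    moreover have "\<mu> \<one>\<^bsub>G\<^esub> \<noteq> 0" using mn[of "\<one>\<^bsub>G\<^esub>"] by auto
    ultimately show ?thesis by (metis mult_cancel_left1)
  qed
  have muinv: "\<And>y. y \<in> carrier G \<Longrightarrow> \<mu> y * \<mu> (inv\<^bsub>G\<^esub> y) = 1"
    using mm mu1 by (metis inv_closed r_inv)
  define E where "E x y = f (x \<otimes>\<^bsub>G\<^esub> y) + \<mu> y * f (x \<otimes>\<^bsub>G\<^esub> inv\<^bsub>G\<^esub> y) - 2 * f x * f y" for x y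
  have hE: "\<And>x y. x \<in> carrier G \<Longrightarrow> y \<in> carrier G \<Longrightarrow> cmod (E x y) \<le> \<delta>"
    using assms(5) unfolding E_def by auto
  show ?thesis
  proof (cases "\<exists>M. \<forall>x\<in>carrier G. cmod (f x) \<le> M")
    case True then show ?thesis by blast
  next
    case False
    then have unb: "\<And>M. \<exists>x\<in>carrier G. cmod (f x) > M" by (meson not_le)
    have sym: "f y = \<mu> y * f (inv\<^bsub>G\<^esub> y)" if y: "y \<in> carrier G" for y
    proof (rule ccontr)
      assume ne: "f y \<noteq> \<mu> y * f (inv\<^bsub>G\<^esub> y)"
      define c where "c = \<mu> y * f (inv\<^bsub>G\<^esub> y) - f y"
      have cpos: "cmod c > 0" using ne unfolding c_def by auto
      obtain x where x: "x \<in> carrier G" "cmod (f x) > \<delta> / cmod c" using unb by blast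
      have "E x y - \<mu> y * E x (inv\<^bsub>G\<^esub> y) = 2 * f x * c"
        unfolding E_def c_def using y x muinv[OF y] by (simp add: algebra_simps)
      then have "cmod (2 * f x * c) \<le> cmod (E x y) + cmod (\<mu> y * E x (inv\<^bsub>G\<^esub> y))"
        by (metis norm_triangle_ineq4)
      also have "\<dots> \<le> 2 * \<delta>" using hE[OF x(1) y] hE[OF x(1) inv_closed[OF y]] mn[OF y]
        by (simp add: norm_mult)
      finally have "cmod (f x) * cmod c \<le> \<delta>" by (simp add: norm_mult)
      moreover have "cmod (f x) * cmod c > \<delta>" using x(2) cpos by (simp add: field_simps)
      ultimately show False by simp
    qed
    define F where "F u v = f (v \<otimes>\<^bsub>G\<^esub> u) + \<mu> v * f (inv\<^bsub>G\<^esub> v \<otimes>\<^bsub>G\<^esub> u) - 2 * f u * f v" for u v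
    have hF: "cmod (F u v) \<le> \<delta>" if u: "u \<in> carrier G" and v: "v \<in> carrier G" for u v
    proof -
      have i1: "inv\<^bsub>G\<^esub> (inv\<^bsub>G\<^esub> u \<otimes>\<^bsub>G\<^esub> v) = inv\<^bsub>G\<^esub> v \<otimes>\<^bsub>G\<^esub> u" using u v by (simp add: inv_mult_group)
      have i2: "inv\<^bsub>G\<^esub> (inv\<^bsub>G\<^esub> u \<otimes>\<^bsub>G\<^esub> inv\<^bsub>G\<^esub> v) = v \<otimes>\<^bsub>G\<^esub> u" using u v by (simp add: inv_mult_group)
      have s1: "f (inv\<^bsub>G\<^esub> u \<otimes>\<^bsub>G\<^esub> v) = \<mu> (inv\<^bsub>G\<^esub> u) * \<mu> v * f (inv\<^bsub>G\<^esub> v \<otimes>\<^bsub>G\<^esub> u)"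
        using sym[of "inv\<^bsub>G\<^esub> u \<otimes>\<^bsub>G\<^esub> v"] i1 mm u v by simp
      have s2: "f (inv\<^bsub>G\<^esub> u \<otimes>\<^bsub>G\<^esub> inv\<^bsub>G\<^esub> v) = \<mu> (inv\<^bsub>G\<^esub> u) * \<mu> (inv\<^bsub>G\<^esub> v) * f (v \<otimes>\<^bsub>G\<^esub> u)"
        using sym[of "inv\<^bsub>G\<^esub> u \<otimes>\<^bsub>G\<^esub> inv\<^bsub>G\<^esub> v"] i2 mm u v by simp
      have s3: "f (inv\<^bsub>G\<^esub> u) = \<mu> (inv\<^bsub>G\<^esub> u) * f u" using sym[of "inv\<^bsub>G\<^esub> u"] u by simp
      have "\<mu> u * E (inv\<^bsub>G\<^esub> u) v = (\<mu> u * \<mu> (inv\<^bsub>G\<^esub> u)) * (\<mu> v * f (inv\<^bsub>G\<^esub> v \<otimes>\<^bsub>G\<^esub> u) + (\<mu> v * \<mu> (inv\<^bsub>G\<^esub> v)) * f (v \<otimes>\<^bsub>G\<^esub> u) - 2 * f u * f v)"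
        unfolding E_def s1 s2 s3 by (simp add: algebra_simps)
      also have "\<dots> = F u v" unfolding F_def using muinv[OF u] muinv[OF v] by (simp add: algebra_simps)
      finally have "\<mu> u * E (inv\<^bsub>G\<^esub> u) v = F u v" .
      then show ?thesis using hE[OF inv_closed[OF u] v] mn[OF u] by (metis norm_mult mult_1)
    qed
    have "E x y = 0" if x: "x \<in> carrier G" and y: "y \<in> carrier G" for x y
    proof (rule ccontr)
      assume ne: "E x y \<noteq> 0"
      define K where "K = 4 * \<delta> + 2 * cmod (f y) * \<delta>"
      obtain w where w: "w \<in> carrier G" "cmod (f w) > K / (2 * cmod (E x y))" using unb by blast
      have id: "2 * f w * E x y = - F (x \<otimes>\<^bsub>G\<^esub> y) w - \<mu> y * F (x \<otimes>\<^bsub>G\<^esub> inv\<^bsub>G\<^esub> y) w + 2 * f y * F x w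
                 + E (w \<otimes>\<^bsub>G\<^esub> x) y + \<mu> w * E (inv\<^bsub>G\<^esub> w \<otimes>\<^bsub>G\<^esub> x) y"
        unfolding E_def F_def using x y w(1) by (simp add: m_assoc algebra_simps)
      have "cmod (2 * f w * E x y) \<le> cmod (F (x \<otimes>\<^bsub>G\<^esub> y) w) + cmod (\<mu> y * F (x \<otimes>\<^bsub>G\<^esub> inv\<^bsub>G\<^esub> y) w)
             + cmod (2 * f y * F x w) + cmod (E (w \<otimes>\<^bsub>G\<^esub> x) y) + cmod (\<mu> w * E (inv\<^bsub>G\<^esub> w \<otimes>\<^bsub>G\<^esub> x) y)"
        unfolding id by (rule tri5)
      also have "\<dots> \<le> \<delta> + \<delta> + 2 * cmod (f y) * \<delta> + \<delta> + \<delta>"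
      proof -
        have a: "cmod (F (x \<otimes>\<^bsub>G\<^esub> y) w) \<le> \<delta>" using hF x y w by simp
        have b: "cmod (\<mu> y * F (x \<otimes>\<^bsub>G\<^esub> inv\<^bsub>G\<^esub> y) w) \<le> \<delta>" using hF x y w mn[OF y] by (simp add: norm_mult)
        have c: "cmod (2 * f y * F x w) \<le> 2 * cmod (f y) * \<delta>"
          using hF[OF x w(1)] by (simp add: norm_mult mult_left_mono)
        have d: "cmod (E (w \<otimes>\<^bsub>G\<^esub> x) y) \<le> \<delta>" using hE x y w by simp
        have e: "cmod (\<mu> w * E (inv\<^bsub>G\<^esub> w \<otimes>\<^bsub>G\<^esub> x) y) \<le> \<delta>" using hE x y w mn[OF w(1)] by (simp add: norm_mult)
        show ?thesis using a b c d e by linarith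
      qed
      finally have "cmod (f w) * (2 * cmod (E x y)) \<le> K" unfolding K_def by (simp add: norm_mult)
      moreover have "cmod (f w) * (2 * cmod (E x y)) > K" using w(2) ne by (simp add: field_simps)
      ultimately show False by simp
    qed
    then show ?thesis unfolding E_def by auto
  qed
qed

end
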